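(* Let $U,V,W\in\widetilde{\mathcal V}^r$, $K,S\in\mathcal B^q$ and $f,g\in C^\infty(\mathbb R)$. Suppose \[ (EV)U-UV=U'[K]+fU_\lambda,\qquad (EW)U-UW=U'[S]+gU_\lambda . \] Then \[ (E[\![V,W]\!])U-U[\![V,W]\!]=U'[T]+[\![f,g]\!]U_\lambda,\qquad T=[K,S], \] where $[K,S]=K'[S]-S'[K]$, $[\![V,W]\!]=V'[S]-W'[K]+VW-WV+gV_\lambda-fW_\lambda$ and $[\![f,g]\!]=f'g-fg'$.
   Context: Let $u=(u_1,\dots,u_q)^T$ with $u_i=u_i(t,n)$ real functions on $\mathbb R\times\mathbb Z$. $\mathcal B$ is the space of real functions $P(t,n,u)$, $C^\infty$ in $t,n$ and $C^\infty$-Gateaux differentiable in $u$; $\mathcal B^q$ is $q$-component vectors over $\mathcal B$. $\widetilde{\mathcal V}^r$ is the set of $r\times r$ matrices with entries $V_{ij}(t,n,u,\lambda)\in\mathcal B$ for each real parameter $\lambda$, smooth in $\lambda$; $V_\lambda=\partial V/\partial\lambda$. $E$ is the shift operator $(Ex)(n)=x(n+1)$; for a matrix $V$ depending on $n$ and $u$, $EV$ is $V$ with $n$ replaced by $n+1$ (so $u(n)$ becomes $u(n+1)$). Gateaux derivative: $X'[S]=\frac{d}{d\varepsilon}\big|_{\varepsilon=0}X(u+\varepsilon S)$. Products are matrix products. *)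

theory Defs
  imports "HOL-Analysis.Analysis"
begin

text \<open>Lattice fields: at a fixed time t, u is the sequence m \<mapsto> u(t,m) \<in> R^q.
  An element of B (resp. B^q, resp. a matrix entry of V^r) is modelled as a function
  F t n u lambda with values in a real normed vector space (real, real^'q, real^'r^'r);
  functions independent of lambda are simply constant in the last argument.\<close>

type_synonym ('q, 'b) latfun = "real \<Rightarrow> int \<Rightarrow> (int \<Rightarrow> real^'q) \<Rightarrow> real \<Rightarrow> 'b"
type_synonym 'q latvec = "real \<Rightarrow> int \<Rightarrow> (int \<Rightarrow> real^'q) \<Rightarrow> real^'q"

definition local_fn :: "('q::finite, 'b) latfun \<Rightarrow> bool" where
  "local_fn F \<longleftrightarrow> (\<exists>N::nat. \<forall>t n u v l.
      (\<forall>m. \<bar>m - n\<bar> \<le> int N \<longrightarrow> u m = v m) \<longrightarrow> F t n u l = F t n v l)"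

definition dir_deriv :: "('q::finite, 'b::real_normed_vector) latfun \<Rightarrow> real \<Rightarrow> (int \<Rightarrow> real^'q) \<Rightarrow> real
     \<Rightarrow> ('q, 'b) latfun" where
  "dir_deriv F \<tau> h \<mu> = (\<lambda>t n u l.
     vector_derivative (\<lambda>\<epsilon>. F (t + \<epsilon> * \<tau>) n (\<lambda>m. u m + \<epsilon> *\<^sub>R h m) (l + \<epsilon> * \<mu>)) (at 0))"

text \<open>k times continuously (Gateaux) differentiable, jointly in (t, u, lambda);
  continuity w.r.t. the product topology on sequences.\<close>
fun smooth_k :: "nat \<Rightarrow> ('q::finite, 'b::real_normed_vector) latfun \<Rightarrow> bool" where
  "smooth_k 0 F = (\<forall>n. continuous_on UNIV (\<lambda>(t, u, l). F t n u l))"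
| "smooth_k (Suc k) F = (smooth_k 0 F
      \<and> (\<forall>\<tau> h \<mu> t n u l. (\<lambda>\<epsilon>. F (t + \<epsilon> * \<tau>) n (\<lambda>m. u m + \<epsilon> *\<^sub>R h m) (l + \<epsilon> * \<mu>))
             differentiable (at 0))
      \<and> (\<forall>\<tau> h \<mu>. smooth_k k (dir_deriv F \<tau> h \<mu>)))"

definition lat_smooth :: "('q::finite, 'b::real_normed_vector) latfun \<Rightarrow> bool" where
  "lat_smooth F \<longleftrightarrow> local_fn F \<and> (\<forall>k. smooth_k k F)"

definition inBq :: "'q::finite latvec \<Rightarrow> bool" where
  "inBq K \<longleftrightarrow> lat_smooth (\<lambda>t n u l. K t n u)"

definition inVr :: "('q::finite, real^'r^'r) latfun \<Rightarrow> bool" where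
  "inVr V \<longleftrightarrow> lat_smooth V"

definition smooth_real :: "(real \<Rightarrow> real) \<Rightarrow> bool" where
  "smooth_real f \<longleftrightarrow> (\<forall>k x. ((deriv ^^ k) f) differentiable (at x))"

definition gder :: "('q::finite, 'b::real_normed_vector) latfun \<Rightarrow> 'q latvec \<Rightarrow> ('q, 'b) latfun" where
  "gder X S = (\<lambda>t n u l. vector_derivative (\<lambda>\<epsilon>. X t n (\<lambda>m. u m + \<epsilon> *\<^sub>R S t m u) l) (at 0))"

definition gderq :: "'q::finite latvec \<Rightarrow> 'q latvec \<Rightarrow> 'q latvec" where
  "gderq X S = (\<lambda>t n u. vector_derivative (\<lambda>\<epsilon>. X t n (\<lambda>m. u m + \<epsilon> *\<^sub>R S t m u)) (at 0))"

definition shiftE :: "('q, 'b) latfun \<Rightarrow> ('q, 'b) latfun" where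
  "shiftE X = (\<lambda>t n u l. X t (n + 1) u l)"

definition lder :: "('q::finite, 'b::real_normed_vector) latfun \<Rightarrow> ('q, 'b) latfun" where
  "lder X = (\<lambda>t n u l. vector_derivative (\<lambda>l'. X t n u l') (at l))"

definition vf_bracket :: "'q::finite latvec \<Rightarrow> 'q latvec \<Rightarrow> 'q latvec" where
  "vf_bracket K S = (\<lambda>t n u. gderq K S t n u - gderq S K t n u)"

definition mat_bracket :: "('q::finite, real^'r^'r) latfun \<Rightarrow> ('q, real^'r^'r) latfun
    \<Rightarrow> 'q latvec \<Rightarrow> 'q latvec \<Rightarrow> (real \<Rightarrow> real) \<Rightarrow> (real \<Rightarrow> real) \<Rightarrow> ('q, real^'r^'r) latfun" where
  "mat_bracket V W K S f g = (\<lambda>t n u l.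
      gder V S t n u l - gder W K t n u l + V t n u l ** W t n u l - W t n u l ** V t n u l
      + g l *\<^sub>R lder V t n u l - f l *\<^sub>R lder W t n u l)"

definition fun_bracket :: "(real \<Rightarrow> real) \<Rightarrow> (real \<Rightarrow> real) \<Rightarrow> real \<Rightarrow> real" where
  "fun_bracket f g = (\<lambda>l. deriv f l * g l - f l * deriv g l)"

end

theory Submission
  imports Defs
begin


definition sm :: "('q::finite, 'b::real_normed_vector) latfun \<Rightarrow> bool" where
  "sm F \<longleftrightarrow> (\<forall>k. smooth_k k F)"

lemma sm_dir: "sm F \<Longrightarrow> sm (dir_deriv F \<tau> h \<mu>)"
  unfolding sm_def
proof
  fix k assume "\<forall>k. smooth_k k F"
  then have "smooth_k (Suc k) F" by blast
  then show "smooth_k k (dir_deriv F \<tau> h \<mu>)" by simp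
qed

lemma sm_diff: "sm F \<Longrightarrow> (\<lambda>\<epsilon>. F (t + \<epsilon> * \<tau>) n (\<lambda>m. u m + \<epsilon> *\<^sub>R h m) (l + \<epsilon> * \<mu>)) differentiable (at 0)"
  unfolding sm_def
proof -
  assume "\<forall>k. smooth_k k F"
  then have "smooth_k (Suc 0) F" by blast
  then show ?thesis by simp
qed

lemma sm_cont: "sm F \<Longrightarrow> continuous_on UNIV (\<lambda>(t, u, l). F t n u l)"
  unfolding sm_def
proof -
  assume "\<forall>k. smooth_k k F"
  then have "smooth_k 0 F" by blast
  then show ?thesis by simp
qed

lemma sm_D0:
  assumes "sm F"
  shows "((\<lambda>\<epsilon>. F (t + \<epsilon> * \<tau>) n (\<lambda>m. u m + \<epsilon> *\<^sub>R h m) (l + \<epsilon> * \<mu>)) has_vector_derivative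
           dir_deriv F \<tau> h \<mu> t n u l) (at 0)"
  using sm_diff[OF assms, of t \<tau> n u h l \<mu>] unfolding dir_deriv_def
  by (simp add: vector_derivative_works)

lemma sm_D:
  assumes "sm F"
  shows "((\<lambda>\<epsilon>. F (t + \<epsilon> * \<tau>) n (\<lambda>m. u m + \<epsilon> *\<^sub>R h m) (l + \<epsilon> * \<mu>)) has_vector_derivative
           dir_deriv F \<tau> h \<mu> (t + s * \<tau>) n (\<lambda>m. u m + s *\<^sub>R h m) (l + s * \<mu>)) (at s)"
proof -
  let ?g = "\<lambda>\<epsilon>. F (t + s * \<tau> + \<epsilon> * \<tau>) n (\<lambda>m. u m + s *\<^sub>R h m + \<epsilon> *\<^sub>R h m) (l + s * \<mu> + \<epsilon> * \<mu>)"
  have g: "(?g has_vector_derivative dir_deriv F \<tau> h \<mu> (t + s * \<tau>) n (\<lambda>m. u m + s *\<^sub>R h m) (l + s * \<mu>)) (at 0)"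
    using sm_D0[OF assms, of "t + s * \<tau>" \<tau> n "\<lambda>m. u m + s *\<^sub>R h m" h "l + s * \<mu>" \<mu>] by simp
  have sh: "((\<lambda>x. x - s) has_vector_derivative 1) (at s)"
    by (auto intro!: derivative_eq_intros)
  have "((?g \<circ> (\<lambda>x. x - s)) has_vector_derivative (1 *\<^sub>R dir_deriv F \<tau> h \<mu> (t + s * \<tau>) n (\<lambda>m. u m + s *\<^sub>R h m) (l + s * \<mu>))) (at s)"
    by (rule vector_diff_chain_at[OF sh]) (simp add: g)
  moreover have "?g \<circ> (\<lambda>x. x - s) = (\<lambda>\<epsilon>. F (t + \<epsilon> * \<tau>) n (\<lambda>m. u m + \<epsilon> *\<^sub>R h m) (l + \<epsilon> * \<mu>))"
    by (auto simp: fun_eq_iff algebra_simps)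
  ultimately show ?thesis by simp
qed

lemma sm_contline:
  assumes "sm F"
  shows "continuous_on UNIV (\<lambda>p::real\<times>real. F (t + fst p * ta + snd p * tb) n
            (\<lambda>m. u m + fst p *\<^sub>R ha m + snd p *\<^sub>R hb m) (l + fst p * ma + snd p * mb))"
proof -
  have c: "continuous_on UNIV (\<lambda>(t, u, l). F t n u l)" by (rule sm_cont[OF assms])
  have i: "continuous_on UNIV (\<lambda>p::real\<times>real. (t + fst p * ta + snd p * tb,
            (\<lambda>m. u m + fst p *\<^sub>R ha m + snd p *\<^sub>R hb m), l + fst p * ma + snd p * mb))"
    apply (intro continuous_on_Pair)
      apply (intro continuous_intros)
     apply (rule continuous_on_coordinatewise_then_product)
     apply (intro continuous_intros)
    apply (intro continuous_intros)
    done
  have "continuous_on UNIV ((\<lambda>(t, u, l). F t n u l) \<circ> (\<lambda>p::real\<times>real. (t + fst p * ta + snd p * tb,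
            (\<lambda>m. u m + fst p *\<^sub>R ha m + snd p *\<^sub>R hb m), l + fst p * ma + snd p * mb)))"
    by (rule continuous_on_compose[OF i]) (rule continuous_on_subset[OF c], simp)
  then show ?thesis by (simp add: o_def)
qed

lemma sm_cont00:
  assumes "sm F"
  shows "continuous (at (sa, ra)) (\<lambda>p::real\<times>real. F (t + fst p * ta + snd p * tb) n
            (\<lambda>m. u m + fst p *\<^sub>R ha m + snd p *\<^sub>R hb m) (l + fst p * ma + snd p * mb))"
  using sm_contline[OF assms] by (simp add: continuous_on_eq_continuous_at)



lemma mvt_c:
  fixes f :: "real \<Rightarrow> 'b::real_normed_vector"
  assumes d: "\<And>x. x \<in> closed_segment a b \<Longrightarrow> (f has_vector_derivative f' x) (at x)"
    and bd: "\<And>x. x \<in> closed_segment a b \<Longrightarrow> norm (f' x - c) \<le> B"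
  shows "norm (f b - f a - (b - a) *\<^sub>R c) \<le> \<bar>b - a\<bar> * B"
proof -
  define g where "g x = f x - x *\<^sub>R c" for x
  have gd: "(g has_derivative (\<lambda>h. h *\<^sub>R (f' x - c))) (at x within closed_segment a b)"
    if "x \<in> closed_segment a b" for x
  proof -
    have c1: "((\<lambda>x. x *\<^sub>R c) has_vector_derivative c) (at x)"
      by (rule has_vector_derivative_eq_rhs[OF has_vector_derivative_scaleR[OF DERIV_ident has_vector_derivative_const]]) simp
    have "((\<lambda>x. f x - x *\<^sub>R c) has_vector_derivative (f' x - c)) (at x)"
      by (rule has_vector_derivative_diff[OF d[OF that] c1])
    then show ?thesis unfolding g_def has_vector_derivative_def
      by (simp add: has_derivative_at_withinI)
  qed
  have "norm (g b - g a) \<le> B * norm (b - a)"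
  proof (rule differentiable_bound[OF convex_closed_segment gd])
    fix x assume "x \<in> closed_segment a b"
    then have b: "norm (f' x - c) \<le> B" by (rule bd)
    show "onorm (\<lambda>h. h *\<^sub>R (f' x - c)) \<le> B"
    proof (rule onorm_le)
      fix y :: real
      have "\<bar>y\<bar> * norm (f' x - c) \<le> \<bar>y\<bar> * B" by (rule mult_left_mono[OF b]) simp
      then show "norm (y *\<^sub>R (f' x - c)) \<le> B * norm y" by (simp add: mult.commute)
    qed
  qed auto
  then show ?thesis by (simp add: g_def algebra_simps)
qed

lemma schwarz_est:
  fixes P Pa Pab :: "real \<Rightarrow> real \<Rightarrow> 'b::real_normed_vector"
  assumes d1: "\<And>s r. ((\<lambda>s. P s r) has_vector_derivative Pa s r) (at s)"
    and d12: "\<And>s r. ((\<lambda>r. Pa s r) has_vector_derivative Pab s r) (at r)"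
    and c: "\<And>s r. \<bar>s\<bar> < d \<Longrightarrow> \<bar>r\<bar> < d \<Longrightarrow> norm (Pab s r - Pab 0 0) \<le> e"
    and s: "\<bar>s\<bar> < d" and r: "\<bar>r\<bar> < d"
  shows "norm (P s r - P s 0 - P 0 r + P 0 0 - (s * r) *\<^sub>R Pab 0 0) \<le> \<bar>s\<bar> * (\<bar>r\<bar> * e)"
proof -
  have seg: "\<bar>x\<bar> < d" if "x \<in> closed_segment 0 y" "\<bar>y\<bar> < d" for x y
    using that by (auto simp: closed_segment_eq_real_ivl split: if_splits)
  have inner: "norm (Pa \<sigma> r - Pa \<sigma> 0 - r *\<^sub>R Pab 0 0) \<le> \<bar>r\<bar> * e" if "\<bar>\<sigma>\<bar> < d" for \<sigma>
    using mvt_c[of 0 r "\<lambda>r. Pa \<sigma> r" "\<lambda>r. Pab \<sigma> r" "Pab 0 0" e] d12 c seg that r by auto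
  have "norm ((P s r - P s 0) - (P 0 r - P 0 0) - (s - 0) *\<^sub>R (r *\<^sub>R Pab 0 0)) \<le> \<bar>s - 0\<bar> * (\<bar>r\<bar> * e)"
  proof (rule mvt_c[of 0 s "\<lambda>s. P s r - P s 0" "\<lambda>s. Pa s r - Pa s 0"])
    fix x assume "x \<in> closed_segment 0 s"
    show "((\<lambda>s. P s r - P s 0) has_vector_derivative Pa x r - Pa x 0) (at x)"
      by (intro derivative_intros d1)
    show "norm (Pa x r - Pa x 0 - r *\<^sub>R Pab 0 0) \<le> \<bar>r\<bar> * e"
      by (rule inner) (use seg \<open>x \<in> _\<close> s in auto)
  qed
  then show ?thesis by (simp add: algebra_simps)
qed

lemma cont_ball:
  fixes \<psi> :: "real \<Rightarrow> real \<Rightarrow> 'b::real_normed_vector"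
  assumes c: "continuous (at (0,0)) (\<lambda>(s,r). \<psi> s r)" and e: "e > 0"
  shows "\<exists>d>0. \<forall>s r. \<bar>s\<bar> < d \<longrightarrow> \<bar>r\<bar> < d \<longrightarrow> norm (\<psi> s r - \<psi> 0 0) \<le> e"
proof -
    obtain d where d: "d > 0" "\<And>x'. dist x' (0,0) < d \<Longrightarrow> dist ((\<lambda>(s,r). \<psi> s r) x') ((\<lambda>(s,r). \<psi> s r) (0,0)) < e"
      using c e unfolding continuous_at_eps_delta by blast
    show ?thesis
    proof (intro exI[of _ "d/2"] conjI allI impI)
      fix s r :: real assume "\<bar>s\<bar> < d/2" "\<bar>r\<bar> < d/2"
      then have "dist (s, r) (0,0) < d"
        using sqrt_sum_squares_le_sum_abs[of s r] by (simp add: dist_Pair_Pair dist_real_def)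
      from d(2)[OF this] show "norm (\<psi> s r - \<psi> 0 0) \<le> e" by (simp add: dist_norm)
    qed (use d in auto)
qed

lemma schwarz:
  fixes \<phi> \<phi>1 \<phi>12 \<phi>2 \<phi>21 :: "real \<Rightarrow> real \<Rightarrow> 'b::real_normed_vector"
  assumes d1: "\<And>s r. ((\<lambda>s. \<phi> s r) has_vector_derivative \<phi>1 s r) (at s)"
    and d12: "\<And>s r. ((\<lambda>r. \<phi>1 s r) has_vector_derivative \<phi>12 s r) (at r)"
    and d2: "\<And>s r. ((\<lambda>r. \<phi> s r) has_vector_derivative \<phi>2 s r) (at r)"
    and d21: "\<And>s r. ((\<lambda>s. \<phi>2 s r) has_vector_derivative \<phi>21 s r) (at s)"
    and c12: "continuous (at (0,0)) (\<lambda>(s,r). \<phi>12 s r)"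
    and c21: "continuous (at (0,0)) (\<lambda>(s,r). \<phi>21 s r)"
  shows "\<phi>12 0 0 = \<phi>21 0 0"
proof -
  have "norm (\<phi>12 0 0 - \<phi>21 0 0) \<le> 2 * e" if e: "e > 0" for e
  proof -
    obtain da where da: "da > 0" "\<And>s r. \<bar>s\<bar> < da \<Longrightarrow> \<bar>r\<bar> < da \<Longrightarrow> norm (\<phi>12 s r - \<phi>12 0 0) \<le> e"
      using cont_ball[OF c12 e] by blast
    have c21': "continuous (at (0,0)) (\<lambda>(s,r). \<phi>21 r s)"
    proof -
      have sw: "isCont (\<lambda>p::real\<times>real. (snd p, fst p)) (0,0)" by (intro continuous_intros)
      have "continuous (at (0,0)) ((\<lambda>(s,r). \<phi>21 s r) \<circ> (\<lambda>p::real\<times>real. (snd p, fst p)))"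
        by (rule continuous_at_compose[OF sw]) (simp add: c21)
      then show ?thesis by (simp add: o_def split_beta')
    qed
    obtain db where db: "db > 0" "\<And>s r. \<bar>s\<bar> < db \<Longrightarrow> \<bar>r\<bar> < db \<Longrightarrow> norm (\<phi>21 r s - \<phi>21 0 0) \<le> e"
      using cont_ball[OF c21' e] by blast
    define x where "x = min da db / 2"
    have x: "x > 0" "\<bar>x\<bar> < da" "\<bar>x\<bar> < db" using da db by (auto simp: x_def)
    have A: "norm (\<phi> x x - \<phi> x 0 - \<phi> 0 x + \<phi> 0 0 - (x * x) *\<^sub>R \<phi>12 0 0) \<le> \<bar>x\<bar> * (\<bar>x\<bar> * e)"
      by (rule schwarz_est[where d=da, OF d1 d12 da(2)]) (use x in auto)
    have B: "norm (\<phi> x x - \<phi> 0 x - \<phi> x 0 + \<phi> 0 0 - (x * x) *\<^sub>R \<phi>21 0 0) \<le> \<bar>x\<bar> * (\<bar>x\<bar> * e)"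
      by (rule schwarz_est[where d=db and P="\<lambda>s r. \<phi> r s" and Pa="\<lambda>s r. \<phi>2 r s"
            and Pab="\<lambda>s r. \<phi>21 r s", OF d2 d21 db(2)]) (use x in auto)
    have "norm ((x * x) *\<^sub>R (\<phi>12 0 0 - \<phi>21 0 0)) \<le> norm ((\<phi> x x - \<phi> 0 x - \<phi> x 0 + \<phi> 0 0 - (x * x) *\<^sub>R \<phi>21 0 0)
          - (\<phi> x x - \<phi> x 0 - \<phi> 0 x + \<phi> 0 0 - (x * x) *\<^sub>R \<phi>12 0 0))"
      by (simp add: algebra_simps)
    also have "\<dots> \<le> \<bar>x\<bar> * (\<bar>x\<bar> * e) + \<bar>x\<bar> * (\<bar>x\<bar> * e)"
      by (rule order_trans[OF norm_triangle_ineq4]) (use A B in linarith)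
    also have "\<dots> = (x * x) * (2 * e)" using x by (simp add: algebra_simps)
    also have "norm ((x * x) *\<^sub>R (\<phi>12 0 0 - \<phi>21 0 0)) = (x * x) * norm (\<phi>12 0 0 - \<phi>21 0 0)"
      by simp
    finally have "(x * x) * norm (\<phi>12 0 0 - \<phi>21 0 0) \<le> (x * x) * (2 * e)" .
    moreover have "x * x > 0" using x by simp
    ultimately show ?thesis by (simp add: mult_le_cancel_left_pos)
  qed
  then have H: "\<And>e. e > 0 \<Longrightarrow> norm (\<phi>12 0 0 - \<phi>21 0 0) \<le> 2 * e" .
  have "norm (\<phi>12 0 0 - \<phi>21 0 0) = 0"
  proof (rule ccontr)
    assume "norm (\<phi>12 0 0 - \<phi>21 0 0) \<noteq> 0"
    then have p: "norm (\<phi>12 0 0 - \<phi>21 0 0) > 0" by simp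
    from H[of "norm (\<phi>12 0 0 - \<phi>21 0 0) / 4"] p show False by simp
  qed
  then show ?thesis by simp
qed



lemma dd_add:
  assumes F: "sm F"
  shows "dir_deriv F (\<tau>1 + \<tau>2) (\<lambda>m. h1 m + h2 m) (\<mu>1 + \<mu>2) t n u l
       = dir_deriv F \<tau>1 h1 \<mu>1 t n u l + dir_deriv F \<tau>2 h2 \<mu>2 t n u l"
proof -
  define A where "A = dir_deriv F \<tau>1 h1 \<mu>1 t n u l"
  define B where "B = dir_deriv F \<tau>2 h2 \<mu>2 t n u l"
  define G where "G = (\<lambda>\<epsilon>. F (t + \<epsilon> * (\<tau>1 + \<tau>2)) n (\<lambda>m. u m + \<epsilon> *\<^sub>R (h1 m + h2 m)) (l + \<epsilon> * (\<mu>1 + \<mu>2)))"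
  define P1 where "P1 = (\<lambda>\<epsilon>. F (t + \<epsilon> * \<tau>1) n (\<lambda>m. u m + \<epsilon> *\<^sub>R h1 m) (l + \<epsilon> * \<mu>1))"
  define \<phi> where "\<phi> = (\<lambda>s r. F (t + s * \<tau>1 + r * \<tau>2) n (\<lambda>m. u m + s *\<^sub>R h1 m + r *\<^sub>R h2 m) (l + s * \<mu>1 + r * \<mu>2))"
  define \<psi> where "\<psi> = (\<lambda>s r. dir_deriv F \<tau>2 h2 \<mu>2 (t + s * \<tau>1 + r * \<tau>2) n (\<lambda>m. u m + s *\<^sub>R h1 m + r *\<^sub>R h2 m) (l + s * \<mu>1 + r * \<mu>2))"
  have P1d: "(P1 has_vector_derivative A) (at 0)"
    unfolding P1_def A_def by (rule sm_D0[OF F])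
  have \<phi>d: "((\<lambda>r. \<phi> s r) has_vector_derivative \<psi> s r) (at r)" for s r
    unfolding \<phi>_def \<psi>_def using sm_D[OF F, of "t + s * \<tau>1" \<tau>2 n "\<lambda>m. u m + s *\<^sub>R h1 m" h2 "l + s * \<mu>1" \<mu>2 r]
    by simp
  have \<psi>c: "continuous (at (0,0)) (\<lambda>(s,r). \<psi> s r)"
    using sm_cont00[OF sm_dir[OF F, of "\<tau>2" h2 "\<mu>2"], where sa=0 and ra=0 and t=t and ta="\<tau>1" and tb="\<tau>2" and n=n and u=u and ha=h1 and hb=h2 and l=l and ma="\<mu>1" and mb="\<mu>2"]
    unfolding \<psi>_def by (simp add: split_beta')
  have \<psi>0: "\<psi> 0 0 = B" unfolding \<psi>_def B_def by simp
  have G\<phi>: "G y = \<phi> y y" for y unfolding G_def \<phi>_def by (simp add: algebra_simps)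
  have P\<phi>: "P1 y = \<phi> y 0" for y unfolding P1_def \<phi>_def by simp
  have G0: "G 0 = P1 0" unfolding G_def P1_def by simp
  have "(G has_vector_derivative A + B) (at 0)"
    unfolding has_vector_derivative_def has_derivative_at_alt
  proof (intro conjI allI impI)
    show "bounded_linear (\<lambda>x. x *\<^sub>R (A + B))" by (rule bounded_linear_scaleR_left)
    fix e :: real assume e: "e > 0"
    obtain d1 where d1: "d1 > 0" "\<And>y. norm (y - 0) < d1 \<Longrightarrow> norm (P1 y - P1 0 - (y - 0) *\<^sub>R A) \<le> e/2 * norm (y - 0)"
      using P1d e unfolding has_vector_derivative_def has_derivative_at_alt by (meson half_gt_zero)
    obtain d2 where d2: "d2 > 0" "\<And>s r. \<bar>s\<bar> < d2 \<Longrightarrow> \<bar>r\<bar> < d2 \<Longrightarrow> norm (\<psi> s r - \<psi> 0 0) \<le> e/2"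
      using cont_ball[OF \<psi>c, of "e/2"] e by auto
    show "\<exists>d>0. \<forall>y. norm (y - 0) < d \<longrightarrow> norm (G y - G 0 - (y - 0) *\<^sub>R (A + B)) \<le> e * norm (y - 0)"
    proof (intro exI[of _ "min d1 d2"] conjI allI impI)
      show "min d1 d2 > 0" using d1 d2 by simp
      fix y :: real assume y: "norm (y - 0) < min d1 d2"
      have a: "norm (P1 y - P1 0 - y *\<^sub>R A) \<le> e/2 * \<bar>y\<bar>" using d1(2)[of y] y by simp
      have b: "norm (\<phi> y y - \<phi> y 0 - (y - 0) *\<^sub>R B) \<le> \<bar>y - 0\<bar> * (e/2)"
      proof (rule mvt_c)
        fix x assume x: "x \<in> closed_segment 0 y"
        show "((\<lambda>r. \<phi> y r) has_vector_derivative \<psi> y x) (at x)" by (rule \<phi>d)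
        have "\<bar>x\<bar> \<le> \<bar>y\<bar>" using x by (auto simp: closed_segment_eq_real_ivl split: if_splits)
        then show "norm (\<psi> y x - B) \<le> e/2" using d2(2)[of y x] y \<psi>0 by simp
      qed
      have "G y - G 0 - (y - 0) *\<^sub>R (A + B) = (P1 y - P1 0 - y *\<^sub>R A) + (\<phi> y y - \<phi> y 0 - (y - 0) *\<^sub>R B)"
        using G\<phi> P\<phi> G0 by (simp add: algebra_simps)
      then have "norm (G y - G 0 - (y - 0) *\<^sub>R (A + B)) \<le> norm (P1 y - P1 0 - y *\<^sub>R A) + norm (\<phi> y y - \<phi> y 0 - (y - 0) *\<^sub>R B)"
        by (simp add: norm_triangle_ineq)
      also have "\<dots> \<le> e * norm (y - 0)"
      proof -
        have b': "norm (\<phi> y y - \<phi> y 0 - (y - 0) *\<^sub>R B) \<le> e/2 * \<bar>y\<bar>" using b by (simp add: mult.commute)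
        have "e/2 * \<bar>y\<bar> + e/2 * \<bar>y\<bar> = e * norm (y - 0)" by simp
        then show ?thesis using a b' by linarith
      qed
      finally show "norm (G y - G 0 - (y - 0) *\<^sub>R (A + B)) \<le> e * norm (y - 0)" .
    qed
  qed
  then show ?thesis unfolding dir_deriv_def A_def B_def G_def
    by (simp add: vector_derivative_at)
qed

lemma dd_scale:
  assumes F: "sm F"
  shows "dir_deriv F (c * \<tau>) (\<lambda>m. c *\<^sub>R h m) (c * \<mu>) t n u l = c *\<^sub>R dir_deriv F \<tau> h \<mu> t n u l"
proof -
  define P where "P = (\<lambda>\<epsilon>. F (t + \<epsilon> * \<tau>) n (\<lambda>m. u m + \<epsilon> *\<^sub>R h m) (l + \<epsilon> * \<mu>))"
  have Pd: "(P has_vector_derivative dir_deriv F \<tau> h \<mu> t n u l) (at (c * 0))"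
    unfolding P_def using sm_D0[OF F] by simp
  have cd: "((\<lambda>\<epsilon>. c * \<epsilon>) has_vector_derivative c) (at 0)"
    by (auto intro!: derivative_eq_intros simp: has_real_derivative_iff_has_vector_derivative[symmetric])
  have "((P \<circ> (\<lambda>\<epsilon>. c * \<epsilon>)) has_vector_derivative c *\<^sub>R dir_deriv F \<tau> h \<mu> t n u l) (at 0)"
    by (rule vector_diff_chain_at[OF cd Pd])
  moreover have "P \<circ> (\<lambda>\<epsilon>. c * \<epsilon>) = (\<lambda>\<epsilon>. F (t + \<epsilon> * (c * \<tau>)) n (\<lambda>m. u m + \<epsilon> *\<^sub>R (c *\<^sub>R h m)) (l + \<epsilon> * (c * \<mu>)))"
    unfolding P_def by (simp add: fun_eq_iff algebra_simps)
  ultimately show ?thesis unfolding dir_deriv_def by (simp add: vector_derivative_at)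
qed

lemma dd_zero: "dir_deriv F 0 (\<lambda>m. 0) 0 t n u l = 0"
  unfolding dir_deriv_def by simp

lemma dd_add0:
  assumes F: "sm F"
  shows "dir_deriv F 0 (\<lambda>m. h1 m + h2 m) 0 t n u l = dir_deriv F 0 h1 0 t n u l + dir_deriv F 0 h2 0 t n u l"
  using dd_add[OF F, of 0 0 h1 h2 0 0 t n u l] by simp

lemma dd_scale0:
  assumes F: "sm F"
  shows "dir_deriv F 0 (\<lambda>m. c *\<^sub>R h m) 0 t n u l = c *\<^sub>R dir_deriv F 0 h 0 t n u l"
  using dd_scale[OF F, of c 0 h 0 t n u l] by simp

lemma dd_diff0:
  assumes F: "sm F"
  shows "dir_deriv F 0 (\<lambda>m. h1 m - h2 m) 0 t n u l = dir_deriv F 0 h1 0 t n u l - dir_deriv F 0 h2 0 t n u l"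
  using dd_add0[OF F, of h1 "\<lambda>m. (-1) *\<^sub>R h2 m" t n u l] dd_scale0[OF F, of "-1" h2 t n u l] by simp

lemma dd_lin:
  assumes F: "sm F" and I: "finite I"
  shows "dir_deriv F 0 (\<lambda>m. \<Sum>i\<in>I. c i *\<^sub>R g i m) 0 t n u l = (\<Sum>i\<in>I. c i *\<^sub>R dir_deriv F 0 (g i) 0 t n u l)"
  using I
proof (induction I rule: finite_induct)
  case empty
  then show ?case using dd_zero[of F t n u l] by simp
next
  case (insert x I)
  have "dir_deriv F 0 (\<lambda>m. \<Sum>i\<in>insert x I. c i *\<^sub>R g i m) 0 t n u l
      = dir_deriv F 0 (\<lambda>m. c x *\<^sub>R g x m + (\<Sum>i\<in>I. c i *\<^sub>R g i m)) 0 t n u l"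
    using insert by simp
  also have "\<dots> = c x *\<^sub>R dir_deriv F 0 (g x) 0 t n u l + dir_deriv F 0 (\<lambda>m. \<Sum>i\<in>I. c i *\<^sub>R g i m) 0 t n u l"
    by (simp add: dd_add0[OF F] dd_scale0[OF F])
  finally show ?case using insert by simp
qed

lemma dd_sym:
  assumes F: "sm F"
  shows "dir_deriv (dir_deriv F \<tau>1 h1 \<mu>1) \<tau>2 h2 \<mu>2 t n u l = dir_deriv (dir_deriv F \<tau>2 h2 \<mu>2) \<tau>1 h1 \<mu>1 t n u l"
proof -
  define \<phi> where "\<phi> = (\<lambda>s r. F (t + s * \<tau>1 + r * \<tau>2) n (\<lambda>m. u m + s *\<^sub>R h1 m + r *\<^sub>R h2 m) (l + s * \<mu>1 + r * \<mu>2))"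
  define \<phi>1 where "\<phi>1 = (\<lambda>s r. dir_deriv F \<tau>1 h1 \<mu>1 (t + s * \<tau>1 + r * \<tau>2) n (\<lambda>m. u m + s *\<^sub>R h1 m + r *\<^sub>R h2 m) (l + s * \<mu>1 + r * \<mu>2))"
  define \<phi>2 where "\<phi>2 = (\<lambda>s r. dir_deriv F \<tau>2 h2 \<mu>2 (t + s * \<tau>1 + r * \<tau>2) n (\<lambda>m. u m + s *\<^sub>R h1 m + r *\<^sub>R h2 m) (l + s * \<mu>1 + r * \<mu>2))"
  define \<phi>12 where "\<phi>12 = (\<lambda>s r. dir_deriv (dir_deriv F \<tau>1 h1 \<mu>1) \<tau>2 h2 \<mu>2 (t + s * \<tau>1 + r * \<tau>2) n (\<lambda>m. u m + s *\<^sub>R h1 m + r *\<^sub>R h2 m) (l + s * \<mu>1 + r * \<mu>2))"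
  define \<phi>21 where "\<phi>21 = (\<lambda>s r. dir_deriv (dir_deriv F \<tau>2 h2 \<mu>2) \<tau>1 h1 \<mu>1 (t + s * \<tau>1 + r * \<tau>2) n (\<lambda>m. u m + s *\<^sub>R h1 m + r *\<^sub>R h2 m) (l + s * \<mu>1 + r * \<mu>2))"
  have sw: "\<And>G::('a, 'b) latfun. (\<lambda>s. G (t + s * \<tau>1 + r * \<tau>2) n (\<lambda>m. u m + s *\<^sub>R h1 m + r *\<^sub>R h2 m) (l + s * \<mu>1 + r * \<mu>2))
      = (\<lambda>s. G (t + r * \<tau>2 + s * \<tau>1) n (\<lambda>m. u m + r *\<^sub>R h2 m + s *\<^sub>R h1 m) (l + r * \<mu>2 + s * \<mu>1))" for r
    by (simp add: algebra_simps)
  have d1: "((\<lambda>s. \<phi> s r) has_vector_derivative \<phi>1 s r) (at s)" for s r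
    unfolding \<phi>_def \<phi>1_def sw
    using sm_D[OF F, of "t + r * \<tau>2" \<tau>1 n "\<lambda>m. u m + r *\<^sub>R h2 m" h1 "l + r * \<mu>2" \<mu>1 s]
    by (simp add: algebra_simps)
  have d21: "((\<lambda>s. \<phi>2 s r) has_vector_derivative \<phi>21 s r) (at s)" for s r
    unfolding \<phi>2_def \<phi>21_def sw
    using sm_D[OF sm_dir[OF F, of "\<tau>2" h2 "\<mu>2"], of "t + r * \<tau>2" \<tau>1 n "\<lambda>m. u m + r *\<^sub>R h2 m" h1 "l + r * \<mu>2" \<mu>1 s]
    by (simp add: algebra_simps)
  have d2: "((\<lambda>r. \<phi> s r) has_vector_derivative \<phi>2 s r) (at r)" for s r
    unfolding \<phi>_def \<phi>2_def
    using sm_D[OF F, of "t + s * \<tau>1" \<tau>2 n "\<lambda>m. u m + s *\<^sub>R h1 m" h2 "l + s * \<mu>1" \<mu>2 r]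
    by simp
  have d12: "((\<lambda>r. \<phi>1 s r) has_vector_derivative \<phi>12 s r) (at r)" for s r
    unfolding \<phi>1_def \<phi>12_def
    using sm_D[OF sm_dir[OF F, of "\<tau>1" h1 "\<mu>1"], of "t + s * \<tau>1" \<tau>2 n "\<lambda>m. u m + s *\<^sub>R h1 m" h2 "l + s * \<mu>1" \<mu>2 r]
    by simp
  have c12: "continuous (at (0,0)) (\<lambda>(s,r). \<phi>12 s r)"
    using sm_cont00[OF sm_dir[OF sm_dir[OF F, of "\<tau>1" h1 "\<mu>1"], of "\<tau>2" h2 "\<mu>2"], where sa=0 and ra=0 and t=t and ta="\<tau>1" and tb="\<tau>2" and n=n and u=u and ha=h1 and hb=h2 and l=l and ma="\<mu>1" and mb="\<mu>2"]
    unfolding \<phi>12_def by (simp add: split_beta')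
  have c21: "continuous (at (0,0)) (\<lambda>(s,r). \<phi>21 s r)"
    using sm_cont00[OF sm_dir[OF sm_dir[OF F, of "\<tau>2" h2 "\<mu>2"], of "\<tau>1" h1 "\<mu>1"], where sa=0 and ra=0 and t=t and ta="\<tau>1" and tb="\<tau>2" and n=n and u=u and ha=h1 and hb=h2 and l=l and ma="\<mu>1" and mb="\<mu>2"]
    unfolding \<phi>21_def by (simp add: split_beta')
  have "\<phi>12 0 0 = \<phi>21 0 0" by (rule schwarz[OF d1 d12 d2 d21 c12 c21])
  then show ?thesis unfolding \<phi>12_def \<phi>21_def by simp
qed



definition bas :: "int \<times> 'q::finite \<Rightarrow> int \<Rightarrow> real^'q" where
  "bas p = (\<lambda>m. if m = fst p then axis (snd p) 1 else 0)"

definition locN :: "('q::finite, 'b) latfun \<Rightarrow> nat \<Rightarrow> bool" where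
  "locN F N \<longleftrightarrow> (\<forall>t n u v l. (\<forall>m. \<bar>m - n\<bar> \<le> int N \<longrightarrow> u m = v m) \<longrightarrow> F t n u l = F t n v l)"

lemma local_fn_locN: "local_fn F \<Longrightarrow> \<exists>N. locN F N"
  unfolding local_fn_def locN_def by blast

lemma bas_expand:
  fixes d :: "int \<Rightarrow> real^'q::finite"
  assumes "m \<in> W" "finite W"
  shows "(\<Sum>p\<in>W \<times> UNIV. (d (fst p) $ snd p) *\<^sub>R bas p m) = d m"
  unfolding vec_eq_iff
proof (intro allI)
  fix k :: 'q
  have "(\<Sum>p\<in>W \<times> UNIV. (d (fst p) $ snd p) *\<^sub>R bas p m) $ k
      = (\<Sum>p\<in>W \<times> UNIV. (if p = (m, k) then d m $ k else 0))"
    unfolding sum_component by (rule sum.cong) (auto simp: bas_def axis_def)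
  also have "\<dots> = d m $ k"
    using assms by (simp add: sum.delta')
  finally show "(\<Sum>p\<in>W \<times> UNIV. (d (fst p) $ snd p) *\<^sub>R bas p m) $ k = d m $ k" .
qed

lemma dd_exp:
  assumes F: "sm F" and N: "locN F N"
  shows "dir_deriv F 0 d 0 t n v l
     = (\<Sum>p\<in>{n - int N..n + int N} \<times> UNIV. (d (fst p) $ snd p) *\<^sub>R dir_deriv F 0 (bas p) 0 t n v l)"
proof -
  let ?W = "{n - int N..n + int N}"
  have "dir_deriv F 0 d 0 t n v l = dir_deriv F 0 (\<lambda>m. \<Sum>p\<in>?W \<times> UNIV. (d (fst p) $ snd p) *\<^sub>R bas p m) 0 t n v l"
  proof -
    have "F (t + \<epsilon> * 0) n (\<lambda>m. v m + \<epsilon> *\<^sub>R d m) (l + \<epsilon> * 0)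
        = F (t + \<epsilon> * 0) n (\<lambda>m. v m + \<epsilon> *\<^sub>R (\<Sum>p\<in>?W \<times> UNIV. (d (fst p) $ snd p) *\<^sub>R bas p m)) (l + \<epsilon> * 0)" for \<epsilon>
    proof -
      have "\<forall>m. \<bar>m - n\<bar> \<le> int N \<longrightarrow> v m + \<epsilon> *\<^sub>R d m = v m + \<epsilon> *\<^sub>R (\<Sum>p\<in>?W \<times> UNIV. (d (fst p) $ snd p) *\<^sub>R bas p m)"
      proof (intro allI impI)
        fix m assume "\<bar>m - n\<bar> \<le> int N"
        then have "m \<in> ?W" by auto
        then show "v m + \<epsilon> *\<^sub>R d m = v m + \<epsilon> *\<^sub>R (\<Sum>p\<in>?W \<times> UNIV. (d (fst p) $ snd p) *\<^sub>R bas p m)"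
          by (simp add: bas_expand)
      qed
      moreover have P: "\<And>t u v l. (\<forall>m. \<bar>m - n\<bar> \<le> int N \<longrightarrow> u m = v m) \<Longrightarrow> F t n u l = F t n v l"
        using N unfolding locN_def by blast
      ultimately show ?thesis by (intro P) simp
    qed
    then show ?thesis unfolding dir_deriv_def by simp
  qed
  also have "\<dots> = (\<Sum>p\<in>?W \<times> UNIV. (d (fst p) $ snd p) *\<^sub>R dir_deriv F 0 (bas p) 0 t n v l)"
    by (rule dd_lin[OF F]) simp
  finally show ?thesis .
qed

lemma dd_chain:
  assumes F: "sm F" and N: "locN F N"
    and kd: "\<And>m. ((\<lambda>\<epsilon>. k \<epsilon> m) has_vector_derivative k' m) (at 0)"
  shows "((\<lambda>\<epsilon>. dir_deriv F 0 (k \<epsilon>) 0 t n (\<lambda>m. v m + \<epsilon> *\<^sub>R h m) l) has_vector_derivative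
           dir_deriv (dir_deriv F 0 (k 0) 0) 0 h 0 t n v l + dir_deriv F 0 k' 0 t n v l) (at 0)"
proof -
  let ?I = "{n - int N..n + int N} \<times> (UNIV :: 'a set)"
  define E where "E p \<epsilon> = dir_deriv F 0 (bas p) 0 t n (\<lambda>m. v m + \<epsilon> *\<^sub>R h m) l" for p \<epsilon>
  define E' where "E' p = dir_deriv (dir_deriv F 0 (bas p) 0) 0 h 0 t n v l" for p
  have Ed: "(E p has_vector_derivative E' p) (at 0)" for p
    using sm_D0[OF sm_dir[OF F, of 0 "bas p" 0], of t 0 n v h l 0] unfolding E_def E'_def by simp
  have E0: "E p 0 = dir_deriv F 0 (bas p) 0 t n v l" for p unfolding E_def by simp
  have kc: "((\<lambda>\<epsilon>. k \<epsilon> m $ j) has_real_derivative k' m $ j) (at 0)" for m j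
    unfolding has_real_derivative_iff_has_vector_derivative
    using bounded_linear.has_vector_derivative[OF bounded_linear_vec_nth kd] by simp
  have eq: "(\<lambda>\<epsilon>. dir_deriv F 0 (k \<epsilon>) 0 t n (\<lambda>m. v m + \<epsilon> *\<^sub>R h m) l)
      = (\<lambda>\<epsilon>. \<Sum>p\<in>?I. (k \<epsilon> (fst p) $ snd p) *\<^sub>R E p \<epsilon>)"
    unfolding E_def by (rule ext) (rule dd_exp[OF F N])
  have "((\<lambda>\<epsilon>. \<Sum>p\<in>?I. (k \<epsilon> (fst p) $ snd p) *\<^sub>R E p \<epsilon>) has_vector_derivative
      (\<Sum>p\<in>?I. (k 0 (fst p) $ snd p) *\<^sub>R E' p + (k' (fst p) $ snd p) *\<^sub>R E p 0)) (at 0)"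
    by (intro has_vector_derivative_sum has_vector_derivative_scaleR kc Ed)
  moreover have "(\<Sum>p\<in>?I. (k 0 (fst p) $ snd p) *\<^sub>R E' p + (k' (fst p) $ snd p) *\<^sub>R E p 0)
      = (\<Sum>p\<in>?I. (k 0 (fst p) $ snd p) *\<^sub>R E' p) + dir_deriv F 0 k' 0 t n v l"
    by (simp add: sum.distrib E0 dd_exp[OF F N, of k'])
  moreover have "(\<Sum>p\<in>?I. (k 0 (fst p) $ snd p) *\<^sub>R E' p) = dir_deriv (dir_deriv F 0 (k 0) 0) 0 h 0 t n v l"
  proof -
    have Q1: "((\<lambda>\<epsilon>. dir_deriv F 0 (k 0) 0 t n (\<lambda>m. v m + \<epsilon> *\<^sub>R h m) l) has_vector_derivative
        dir_deriv (dir_deriv F 0 (k 0) 0) 0 h 0 t n v l) (at 0)"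
      using sm_D0[OF sm_dir[OF F, of 0 "k 0" 0], of t 0 n v h l 0] by simp
    have Q2: "((\<lambda>\<epsilon>. dir_deriv F 0 (k 0) 0 t n (\<lambda>m. v m + \<epsilon> *\<^sub>R h m) l) has_vector_derivative
        (\<Sum>p\<in>?I. (k 0 (fst p) $ snd p) *\<^sub>R E' p)) (at 0)"
      unfolding dd_exp[OF F N, of "k 0"] E_def[symmetric]
      by (intro has_vector_derivative_sum bounded_linear.has_vector_derivative[OF bounded_linear_scaleR_right] Ed)
    show ?thesis by (rule vector_derivative_unique_at[OF Q2 Q1])
  qed
  ultimately show ?thesis unfolding eq by simp
qed

lemma bilinear_mm: "bilinear (\<lambda>(A::real^'n::finite^'m::finite) (B::real^'p::finite^'n). A ** B)"
  unfolding bilinear_def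
proof (intro conjI allI)
  fix A :: "real^'n^'m" show "linear (\<lambda>B::real^'p^'n. A ** B)"
    by (rule linearI) (vector matrix_matrix_mult_def sum.distrib distrib_left sum_distrib_left mult.assoc mult.left_commute)+
next
  fix B :: "real^'p^'n" show "linear (\<lambda>A::real^'n^'m. A ** B)"
    by (rule linearI) (vector matrix_matrix_mult_def sum.distrib distrib_right sum_distrib_left mult.assoc)+
qed

lemma bb_mm: "bounded_bilinear (\<lambda>(A::real^'n::finite^'m::finite) (B::real^'p::finite^'n). A ** B)"
  using bilinear_mm bilinear_conv_bounded_bilinear by blast



lemma mm_add_l: "((A::real^'n::finite^'m::finite) + B) ** (C::real^'p::finite^'n) = A ** C + B ** C"
  by (simp add: matrix_matrix_mult_def vec_eq_iff sum.distrib distrib_right)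
lemma mm_add_r: "(A::real^'n::finite^'m::finite) ** ((B::real^'p::finite^'n) + C) = A ** B + A ** C"
  by (rule matrix_add_ldistrib)
lemma mm_diff_l: "((A::real^'n::finite^'m::finite) - B) ** (C::real^'p::finite^'n) = A ** C - B ** C"
  by (simp add: matrix_matrix_mult_def vec_eq_iff sum_subtractf left_diff_distrib)
lemma mm_diff_r: "(A::real^'n::finite^'m::finite) ** ((B::real^'p::finite^'n) - C) = A ** B - A ** C"
  by (simp add: matrix_matrix_mult_def vec_eq_iff sum_subtractf right_diff_distrib)
lemma mm_scale_l: "(c *\<^sub>R (A::real^'n::finite^'m::finite)) ** (C::real^'p::finite^'n) = c *\<^sub>R (A ** C)"
  by (simp add: scalar_matrix_assoc)
lemma mm_scale_r: "(A::real^'n::finite^'m::finite) ** (c *\<^sub>R (C::real^'p::finite^'n)) = c *\<^sub>R (A ** C)"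
  by (simp add: matrix_scalar_ac scalar_matrix_assoc)

lemmas mm_simps = mm_add_l mm_add_r mm_diff_l mm_diff_r mm_scale_l mm_scale_r matrix_mul_assoc

lemma alg:
  fixes V1 U V W1 W DKU DSU Ul DSV1 DSV DSDKU DUKS DSUl DKW1 DKW DKDSU DUSK DKUl V1l Vl DlDKU Ull W1l Wl DlDSU
    :: "real^'r::finite^'r"
  assumes eV: "V1 ** U - U ** V = DKU + f *\<^sub>R Ul"
    and eW: "W1 ** U - U ** W = DSU + g *\<^sub>R Ul"
    and dVS: "V1 ** DSU + DSV1 ** U - (U ** DSV + DSU ** V) = DSDKU + DUKS + f *\<^sub>R DSUl"
    and dWK: "W1 ** DKU + DKW1 ** U - (U ** DKW + DKU ** W) = DKDSU + DUSK + g *\<^sub>R DKUl"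
    and dVl: "V1 ** Ul + V1l ** U - (U ** Vl + Ul ** V) = DlDKU + (f *\<^sub>R Ull + f' *\<^sub>R Ul)"
    and dWl: "W1 ** Ul + W1l ** U - (U ** Wl + Ul ** W) = DlDSU + (g *\<^sub>R Ull + g' *\<^sub>R Ul)"
    and s1: "DSDKU = DKDSU" and s2: "DSUl = DlDSU" and s3: "DKUl = DlDKU"
  shows "(DSV1 - DKW1 + V1 ** W1 - W1 ** V1 + g *\<^sub>R V1l - f *\<^sub>R W1l) ** U
       - U ** (DSV - DKW + V ** W - W ** V + g *\<^sub>R Vl - f *\<^sub>R Wl)
       = (DUKS - DUSK) + (f' * g - f * g') *\<^sub>R Ul"
proof -
  have V1U: "V1 ** U = U ** V + DKU + f *\<^sub>R Ul" using eV by (simp add: algebra_simps)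
  have W1U: "W1 ** U = U ** W + DSU + g *\<^sub>R Ul" using eW by (simp add: algebra_simps)
  have p1: "(V1 ** W1) ** U = (U ** V) ** W + DKU ** W + f *\<^sub>R (Ul ** W) + V1 ** DSU + g *\<^sub>R (V1 ** Ul)"
  proof -
    have "(V1 ** W1) ** U = V1 ** (W1 ** U)" by (simp add: matrix_mul_assoc)
    also have "\<dots> = (V1 ** U) ** W + V1 ** DSU + g *\<^sub>R (V1 ** Ul)"
      unfolding W1U by (simp add: mm_add_r mm_scale_r matrix_mul_assoc)
    also have "\<dots> = (U ** V) ** W + DKU ** W + f *\<^sub>R (Ul ** W) + V1 ** DSU + g *\<^sub>R (V1 ** Ul)"
      unfolding V1U by (simp add: mm_add_l mm_scale_l)
    finally show ?thesis .
  qed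
  have p2: "(W1 ** V1) ** U = (U ** W) ** V + DSU ** V + g *\<^sub>R (Ul ** V) + W1 ** DKU + f *\<^sub>R (W1 ** Ul)"
  proof -
    have "(W1 ** V1) ** U = W1 ** (V1 ** U)" by (simp add: matrix_mul_assoc)
    also have "\<dots> = (W1 ** U) ** V + W1 ** DKU + f *\<^sub>R (W1 ** Ul)"
      unfolding V1U by (simp add: mm_add_r mm_scale_r matrix_mul_assoc)
    also have "\<dots> = (U ** W) ** V + DSU ** V + g *\<^sub>R (Ul ** V) + W1 ** DKU + f *\<^sub>R (W1 ** Ul)"
      unfolding W1U by (simp add: mm_add_l mm_scale_l)
    finally show ?thesis .
  qed
  have q1: "DSV1 ** U = DSDKU + DUKS + f *\<^sub>R DSUl - V1 ** DSU + U ** DSV + DSU ** V"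
    using dVS by (simp add: algebra_simps)
  have q2: "DKW1 ** U = DKDSU + DUSK + g *\<^sub>R DKUl - W1 ** DKU + U ** DKW + DKU ** W"
    using dWK by (simp add: algebra_simps)
  have q3: "V1l ** U = DlDKU + f *\<^sub>R Ull + f' *\<^sub>R Ul - V1 ** Ul + U ** Vl + Ul ** V"
    using dVl by (simp add: algebra_simps)
  have q4: "W1l ** U = DlDSU + g *\<^sub>R Ull + g' *\<^sub>R Ul - W1 ** Ul + U ** Wl + Ul ** W"
    using dWl by (simp add: algebra_simps)
  have "(DSV1 - DKW1 + V1 ** W1 - W1 ** V1 + g *\<^sub>R V1l - f *\<^sub>R W1l) ** U
       - U ** (DSV - DKW + V ** W - W ** V + g *\<^sub>R Vl - f *\<^sub>R Wl)
      = DSV1 ** U - DKW1 ** U + (V1 ** W1) ** U - (W1 ** V1) ** U + g *\<^sub>R (V1l ** U) - f *\<^sub>R (W1l ** U)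
       - (U ** DSV - U ** DKW + (U ** V) ** W - (U ** W) ** V + g *\<^sub>R (U ** Vl) - f *\<^sub>R (U ** Wl))"
    by (simp add: mm_add_l mm_add_r mm_diff_l mm_diff_r mm_scale_l mm_scale_r matrix_mul_assoc)
  also have "\<dots> = (DUKS - DUSK) + (f' * g - f * g') *\<^sub>R Ul"
    unfolding q1 q2 q3 q4 p1 p2 s1 s2 s3
    by (simp add: algebra_simps)
  finally show ?thesis .
qed



lemma gder_dd: "gder X Y t n v l = dir_deriv X 0 (\<lambda>m. Y t m v) 0 t n v l"
  unfolding gder_def dir_deriv_def by simp

lemma ld_has: "sm X \<Longrightarrow> ((\<lambda>l'. X t n v l') has_vector_derivative dir_deriv X 0 (\<lambda>m. 0) 1 t n v l) (at l)"
  using sm_D[of X t 0 n v "\<lambda>m. 0" 0 1 l] by simp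

lemma lder_dd: "sm X \<Longrightarrow> lder X t n v l = dir_deriv X 0 (\<lambda>m. 0) 1 t n v l"
  unfolding lder_def by (rule vector_derivative_at[OF ld_has])

lemma ud_has: "sm X \<Longrightarrow> ((\<lambda>\<epsilon>. X t n (\<lambda>m. v m + \<epsilon> *\<^sub>R h m) l) has_vector_derivative dir_deriv X 0 h 0 t n v l) (at 0)"
  using sm_D0[of X t 0 n v h l 0] by simp

lemma gderq_has:
  assumes K: "sm (\<lambda>t n u l. K t n u)"
  shows "((\<lambda>\<epsilon>. K t m (\<lambda>m'. u m' + \<epsilon> *\<^sub>R S t m' u)) has_vector_derivative gderq K S t m u) (at 0)"
proof -
  have H: "((\<lambda>\<epsilon>. K t m (\<lambda>m'. u m' + \<epsilon> *\<^sub>R S t m' u)) has_vector_derivative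
      dir_deriv (\<lambda>t n u l. K t n u) 0 (\<lambda>m'. S t m' u) 0 t m u 0) (at 0)"
    using ud_has[OF K, of t m u "\<lambda>m'. S t m' u" 0] by simp
  have "gderq K S t m u = dir_deriv (\<lambda>t n u l. K t n u) 0 (\<lambda>m'. S t m' u) 0 t m u 0"
    unfolding gderq_def by (rule vector_derivative_at[OF H])
  then show ?thesis using H by simp
qed

lemma mm_deriv:
  fixes f g :: "real \<Rightarrow> real^'n::finite^'n"
  assumes "(f has_vector_derivative f') (at x)" "(g has_vector_derivative g') (at x)"
  shows "((\<lambda>x. f x ** g x) has_vector_derivative (f x ** g' + f' ** g x)) (at x)"
  using bounded_bilinear.has_vector_derivative[OF bb_mm assms] by simp

lemma deriv_S:
  fixes U V :: "('q::finite, real^'r::finite^'r) latfun"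
  assumes U: "sm U" and N: "locN U N" and V: "sm V" and K: "sm (\<lambda>t n u l. K t n u)"
    and hV: "\<forall>t n u l. shiftE V t n u l ** U t n u l - U t n u l ** V t n u l
               = gder U K t n u l + c l *\<^sub>R lder U t n u l"
  shows "V t (n+1) u l ** dir_deriv U 0 (\<lambda>m. S t m u) 0 t n u l + dir_deriv V 0 (\<lambda>m. S t m u) 0 t (n+1) u l ** U t n u l
       - (U t n u l ** dir_deriv V 0 (\<lambda>m. S t m u) 0 t n u l + dir_deriv U 0 (\<lambda>m. S t m u) 0 t n u l ** V t n u l)
     = dir_deriv (dir_deriv U 0 (\<lambda>m. K t m u) 0) 0 (\<lambda>m. S t m u) 0 t n u l
       + dir_deriv U 0 (\<lambda>m. gderq K S t m u) 0 t n u l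
       + c l *\<^sub>R dir_deriv (dir_deriv U 0 (\<lambda>m. 0) 1) 0 (\<lambda>m. S t m u) 0 t n u l"
proof -
  let ?p = "\<lambda>\<epsilon>. (\<lambda>m. u m + \<epsilon> *\<^sub>R S t m u)"
  have fe: "(\<lambda>\<epsilon>. V t (n+1) (?p \<epsilon>) l ** U t n (?p \<epsilon>) l - U t n (?p \<epsilon>) l ** V t n (?p \<epsilon>) l)
     = (\<lambda>\<epsilon>. dir_deriv U 0 (\<lambda>m. K t m (?p \<epsilon>)) 0 t n (?p \<epsilon>) l + c l *\<^sub>R dir_deriv U 0 (\<lambda>m. 0) 1 t n (?p \<epsilon>) l)"
    using hV by (auto simp: shiftE_def gder_dd lder_dd[OF U])
  have dL: "((\<lambda>\<epsilon>. V t (n+1) (?p \<epsilon>) l ** U t n (?p \<epsilon>) l - U t n (?p \<epsilon>) l ** V t n (?p \<epsilon>) l) has_vector_derivative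
      (V t (n+1) u l ** dir_deriv U 0 (\<lambda>m. S t m u) 0 t n u l + dir_deriv V 0 (\<lambda>m. S t m u) 0 t (n+1) u l ** U t n u l
       - (U t n u l ** dir_deriv V 0 (\<lambda>m. S t m u) 0 t n u l + dir_deriv U 0 (\<lambda>m. S t m u) 0 t n u l ** V t n u l))) (at 0)"
    using has_vector_derivative_diff[OF mm_deriv[OF ud_has[OF V, of t "n+1" u "\<lambda>m. S t m u" l] ud_has[OF U, of t n u "\<lambda>m. S t m u" l]]
        mm_deriv[OF ud_has[OF U, of t n u "\<lambda>m. S t m u" l] ud_has[OF V, of t n u "\<lambda>m. S t m u" l]]]
    by simp
  have kd: "\<And>m. ((\<lambda>\<epsilon>. K t m (?p \<epsilon>)) has_vector_derivative gderq K S t m u) (at 0)"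
    by (rule gderq_has[OF K])
  have dR: "((\<lambda>\<epsilon>. dir_deriv U 0 (\<lambda>m. K t m (?p \<epsilon>)) 0 t n (?p \<epsilon>) l + c l *\<^sub>R dir_deriv U 0 (\<lambda>m. 0) 1 t n (?p \<epsilon>) l)
     has_vector_derivative
       (dir_deriv (dir_deriv U 0 (\<lambda>m. K t m u) 0) 0 (\<lambda>m. S t m u) 0 t n u l
       + dir_deriv U 0 (\<lambda>m. gderq K S t m u) 0 t n u l
       + c l *\<^sub>R dir_deriv (dir_deriv U 0 (\<lambda>m. 0) 1) 0 (\<lambda>m. S t m u) 0 t n u l)) (at 0)"
    using has_vector_derivative_add[OF dd_chain[OF U N, of "\<lambda>\<epsilon> m. K t m (?p \<epsilon>)" "\<lambda>m. gderq K S t m u" t n u "\<lambda>m. S t m u" l, OF kd]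
        bounded_linear.has_vector_derivative[OF bounded_linear_scaleR_right[of "c l"] ud_has[OF sm_dir[OF U, of 0 "\<lambda>m. 0" 1], of t n u "\<lambda>m. S t m u" l]]]
    by simp
  show ?thesis
    using vector_derivative_unique_at[OF dL dR[folded fe]] .
qed

lemma deriv_l:
  fixes U V :: "('q::finite, real^'r::finite^'r) latfun"
  assumes U: "sm U" and V: "sm V" and f: "(f has_real_derivative deriv f l) (at l)"
    and hV: "\<forall>t n u l. shiftE V t n u l ** U t n u l - U t n u l ** V t n u l
               = gder U K t n u l + f l *\<^sub>R lder U t n u l"
  shows "V t (n+1) u l ** dir_deriv U 0 (\<lambda>m. 0) 1 t n u l + dir_deriv V 0 (\<lambda>m. 0) 1 t (n+1) u l ** U t n u l
       - (U t n u l ** dir_deriv V 0 (\<lambda>m. 0) 1 t n u l + dir_deriv U 0 (\<lambda>m. 0) 1 t n u l ** V t n u l)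
     = dir_deriv (dir_deriv U 0 (\<lambda>m. K t m u) 0) 0 (\<lambda>m. 0) 1 t n u l
       + (f l *\<^sub>R dir_deriv (dir_deriv U 0 (\<lambda>m. 0) 1) 0 (\<lambda>m. 0) 1 t n u l + deriv f l *\<^sub>R dir_deriv U 0 (\<lambda>m. 0) 1 t n u l)"
proof -
  have fe: "(\<lambda>x. V t (n+1) u x ** U t n u x - U t n u x ** V t n u x)
     = (\<lambda>x. dir_deriv U 0 (\<lambda>m. K t m u) 0 t n u x + f x *\<^sub>R dir_deriv U 0 (\<lambda>m. 0) 1 t n u x)"
    using hV by (auto simp: shiftE_def gder_dd lder_dd[OF U])
  have dL: "((\<lambda>x. V t (n+1) u x ** U t n u x - U t n u x ** V t n u x) has_vector_derivative
      (V t (n+1) u l ** dir_deriv U 0 (\<lambda>m. 0) 1 t n u l + dir_deriv V 0 (\<lambda>m. 0) 1 t (n+1) u l ** U t n u l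
       - (U t n u l ** dir_deriv V 0 (\<lambda>m. 0) 1 t n u l + dir_deriv U 0 (\<lambda>m. 0) 1 t n u l ** V t n u l))) (at l)"
    using has_vector_derivative_diff[OF mm_deriv[OF ld_has[OF V, of t "n+1" u l] ld_has[OF U, of t n u l]]
        mm_deriv[OF ld_has[OF U, of t n u l] ld_has[OF V, of t n u l]]]
    by simp
  have dR: "((\<lambda>x. dir_deriv U 0 (\<lambda>m. K t m u) 0 t n u x + f x *\<^sub>R dir_deriv U 0 (\<lambda>m. 0) 1 t n u x)
     has_vector_derivative
       (dir_deriv (dir_deriv U 0 (\<lambda>m. K t m u) 0) 0 (\<lambda>m. 0) 1 t n u l
       + (f l *\<^sub>R dir_deriv (dir_deriv U 0 (\<lambda>m. 0) 1) 0 (\<lambda>m. 0) 1 t n u l + deriv f l *\<^sub>R dir_deriv U 0 (\<lambda>m. 0) 1 t n u l))) (at l)"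
    by (intro has_vector_derivative_add has_vector_derivative_scaleR f ld_has sm_dir U)
  show ?thesis
    using vector_derivative_unique_at[OF dL dR[folded fe]] .
qed

theorem theorem2:
  fixes U V W :: "('q::finite, real^'r^'r) latfun"
    and K S :: "'q latvec"
    and f g :: "real \<Rightarrow> real"
  assumes "inVr U" "inVr V" "inVr W" "inBq K" "inBq S" "smooth_real f" "smooth_real g"
    and hV: "\<forall>t n u l. shiftE V t n u l ** U t n u l - U t n u l ** V t n u l
               = gder U K t n u l + f l *\<^sub>R lder U t n u l"
    and hW: "\<forall>t n u l. shiftE W t n u l ** U t n u l - U t n u l ** W t n u l
               = gder U S t n u l + g l *\<^sub>R lder U t n u l"
  shows "\<forall>t n u l. shiftE (mat_bracket V W K S f g) t n u l ** U t n u l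
                   - U t n u l ** mat_bracket V W K S f g t n u l
               = gder U (vf_bracket K S) t n u l + fun_bracket f g l *\<^sub>R lder U t n u l"
proof (intro allI)
  fix t n u l
  have U: "sm U" and V: "sm V" and W: "sm W"
    using assms(1-3) unfolding inVr_def lat_smooth_def sm_def by auto
  obtain N where N: "locN U N"
    using assms(1) local_fn_locN unfolding inVr_def lat_smooth_def by blast
  have K: "sm (\<lambda>t n u l. K t n u)" and S: "sm (\<lambda>t n u l. S t n u)"
    using assms(4,5) unfolding inBq_def lat_smooth_def sm_def by auto
  have fd: "(f has_real_derivative deriv f l) (at l)" and gd: "(g has_real_derivative deriv g l) (at l)"
  proof -
    have "((deriv ^^ 0) f) differentiable (at l)" "((deriv ^^ 0) g) differentiable (at l)"
      using assms(6,7) unfolding smooth_real_def by blast+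
    then show "(f has_real_derivative deriv f l) (at l)" "(g has_real_derivative deriv g l) (at l)"
      by (simp_all add: DERIV_deriv_iff_real_differentiable)
  qed
  have eV: "V t (n+1) u l ** U t n u l - U t n u l ** V t n u l
      = dir_deriv U 0 (\<lambda>m. K t m u) 0 t n u l + f l *\<^sub>R dir_deriv U 0 (\<lambda>m. 0) 1 t n u l"
    using hV by (simp add: shiftE_def gder_dd lder_dd[OF U])
  have eW: "W t (n+1) u l ** U t n u l - U t n u l ** W t n u l
      = dir_deriv U 0 (\<lambda>m. S t m u) 0 t n u l + g l *\<^sub>R dir_deriv U 0 (\<lambda>m. 0) 1 t n u l"
    using hW by (simp add: shiftE_def gder_dd lder_dd[OF U])
  note dVS = deriv_S[OF U N V K hV, where t=t and n=n and u=u and S=S and l=l]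
  note dWK = deriv_S[OF U N W S hW, where t=t and n=n and u=u and S=K and l=l]
  note dVl = deriv_l[OF U V fd hV, where t=t and n=n and u=u]
  note dWl = deriv_l[OF U W gd hW, where t=t and n=n and u=u]
  have s1: "dir_deriv (dir_deriv U 0 (\<lambda>m. K t m u) 0) 0 (\<lambda>m. S t m u) 0 t n u l
      = dir_deriv (dir_deriv U 0 (\<lambda>m. S t m u) 0) 0 (\<lambda>m. K t m u) 0 t n u l"
    by (rule dd_sym[OF U])
  have s2: "dir_deriv (dir_deriv U 0 (\<lambda>m. 0) 1) 0 (\<lambda>m. S t m u) 0 t n u l
      = dir_deriv (dir_deriv U 0 (\<lambda>m. S t m u) 0) 0 (\<lambda>m. 0) 1 t n u l"
    by (rule dd_sym[OF U])
  have s3: "dir_deriv (dir_deriv U 0 (\<lambda>m. 0) 1) 0 (\<lambda>m. K t m u) 0 t n u l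
      = dir_deriv (dir_deriv U 0 (\<lambda>m. K t m u) 0) 0 (\<lambda>m. 0) 1 t n u l"
    by (rule dd_sym[OF U])
  note A = alg[OF eV eW dVS dWK dVl dWl s1 s2 s3]
  have lin: "dir_deriv U 0 (\<lambda>m. vf_bracket K S t m u) 0 t n u l
      = dir_deriv U 0 (\<lambda>m. gderq K S t m u) 0 t n u l - dir_deriv U 0 (\<lambda>m. gderq S K t m u) 0 t n u l"
    unfolding vf_bracket_def by (rule dd_diff0[OF U])
  show "shiftE (mat_bracket V W K S f g) t n u l ** U t n u l
                   - U t n u l ** mat_bracket V W K S f g t n u l
               = gder U (vf_bracket K S) t n u l + fun_bracket f g l *\<^sub>R lder U t n u l"
    unfolding shiftE_def mat_bracket_def fun_bracket_def gder_dd lder_dd[OF U] lder_dd[OF V] lder_dd[OF W] lin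
    using A by (simp add: algebra_simps)
qed

end
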